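(* Let $\mathcal{M}$ and $\mathcal{N}$ be matroids on the same finite ground set $V$, and let $k\ge1$ be an integer. If $k\le\nu(\mathcal{M},\mathcal{N})-1$, then $\mathbf{RG}(\mathcal{M},\mathcal{N};k)$ is connected.
   Context: $\nu(\mathcal{M},\mathcal{N})$ is the maximum size of a set independent in both $\mathcal{M}$ and $\mathcal{N}$. $\mathbf{RG}(\mathcal{M},\mathcal{N};k)$ is the graph whose vertices are the common independent sets of $\mathcal{M}$ and $\mathcal{N}$ of cardinality $k$, two such sets $S,T$ being adjacent if $S\cup T$ is an independent set of $\mathcal{M}$ of cardinality $k+1$. *)

theory Defs
  imports Main
begin

definition matroid :: "'a set \<Rightarrow> ('a set \<Rightarrow> bool) \<Rightarrow> bool" where
  "matroid V indep \<longleftrightarrow>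
     finite V \<and>
     (\<forall>X. indep X \<longrightarrow> X \<subseteq> V) \<and>
     indep {} \<and>
     (\<forall>X Y. indep Y \<and> X \<subseteq> Y \<longrightarrow> indep X) \<and>
     (\<forall>X Y. indep X \<and> indep Y \<and> card X < card Y \<longrightarrow>
        (\<exists>y \<in> Y - X. indep (insert y X)))"

definition common_indep :: "('a set \<Rightarrow> bool) \<Rightarrow> ('a set \<Rightarrow> bool) \<Rightarrow> 'a set \<Rightarrow> bool" where
  "common_indep M N X \<longleftrightarrow> M X \<and> N X"

definition nu :: "('a set \<Rightarrow> bool) \<Rightarrow> ('a set \<Rightarrow> bool) \<Rightarrow> nat" where
  "nu M N = Max {card X | X. common_indep M N X}"

definition RG_vertices :: "('a set \<Rightarrow> bool) \<Rightarrow> ('a set \<Rightarrow> bool) \<Rightarrow> nat \<Rightarrow> 'a set set" where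
  "RG_vertices M N k = {X. common_indep M N X \<and> card X = k}"

definition RG_edges :: "('a set \<Rightarrow> bool) \<Rightarrow> ('a set \<Rightarrow> bool) \<Rightarrow> nat \<Rightarrow> ('a set \<times> 'a set) set" where
  "RG_edges M N k = {(S, T). S \<in> RG_vertices M N k \<and> T \<in> RG_vertices M N k \<and>
                             M (S \<union> T) \<and> card (S \<union> T) = k + 1}"

definition graph_connected :: "'v set \<Rightarrow> ('v \<times> 'v) set \<Rightarrow> bool" where
  "graph_connected Vs E \<longleftrightarrow> Vs \<noteq> {} \<and>
     (\<forall>x\<in>Vs. \<forall>y\<in>Vs. (x, y) \<in> (E \<inter> (Vs \<times> Vs))\<^sup>*)"

end

theory Submission
  imports Defs
begin

lemma matroid_empty: "matroid V M \<Longrightarrow> M {}"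
  unfolding matroid_def by simp

lemma matroid_finite: "matroid V M \<Longrightarrow> M X \<Longrightarrow> finite X"
  unfolding matroid_def by (meson finite_subset)

lemma matroid_sub: "matroid V M \<Longrightarrow> M Y \<Longrightarrow> X \<subseteq> Y \<Longrightarrow> M X"
  unfolding matroid_def by blast

lemma matroid_aug: "matroid V M \<Longrightarrow> M X \<Longrightarrow> M Y \<Longrightarrow> card X < card Y \<Longrightarrow>
   \<exists>y \<in> Y - X. M (insert y X)"
  unfolding matroid_def by blast

lemma aug_to_size:
  assumes m: "matroid V N"
  shows "\<forall>A. N A \<longrightarrow> N S \<longrightarrow> card S - card A = n \<longrightarrow> card A \<le> card S \<longrightarrow>
     (\<exists>B. N B \<and> A \<subseteq> B \<and> B \<subseteq> A \<union> S \<and> card B = card S)"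
proof (induction n)
  case 0
  then show ?case by auto
next
  case (Suc n)
  show ?case
  proof (intro allI impI)
    fix A assume a: "N A" "N S" "card S - card A = Suc n" "card A \<le> card S"
    have lt: "card A < card S" using a(3) by simp
    obtain y where y: "y \<in> S - A" "N (insert y A)"
      using matroid_aug[OF m a(1) a(2) lt] by blast
    have fA: "finite A" using matroid_finite[OF m a(1)] .
    have c: "card (insert y A) = Suc (card A)" using y fA by simp
    have d1: "card S - card (insert y A) = n" using c a(3) by simp
    have d2: "card (insert y A) \<le> card S" using c lt by simp
    obtain B where "N B" "insert y A \<subseteq> B" "B \<subseteq> insert y A \<union> S" "card B = card S"
      using Suc.IH[rule_format, OF y(2) a(2) d1 d2] by blast
    then show "\<exists>B. N B \<and> A \<subseteq> B \<and> B \<subseteq> A \<union> S \<and> card B = card S"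
      using y by blast
  qed
qed

lemma main_step:
  assumes mM: "matroid V M" and mN: "matroid V N"
    and J: "common_indep M N J" "card J = k + 1"
  shows "\<forall>S. S \<in> RG_vertices M N k \<longrightarrow> card (S - J) = n \<longrightarrow>
     (\<exists>T \<in> RG_vertices M N k. T \<subseteq> J \<and> (S, T) \<in> (RG_edges M N k \<inter> (RG_vertices M N k \<times> RG_vertices M N k))\<^sup>*)"
proof (induction n)
  case 0
  show ?case
  proof (intro allI impI)
    fix S assume S: "S \<in> RG_vertices M N k" "card (S - J) = 0"
    have "finite S" using S(1) matroid_finite[OF mM] unfolding RG_vertices_def common_indep_def by auto
    then have "S \<subseteq> J" using S(2) by auto
    then show "\<exists>T \<in> RG_vertices M N k. T \<subseteq> J \<and> (S, T) \<in> (RG_edges M N k \<inter> (RG_vertices M N k \<times> RG_vertices M N k))\<^sup>*"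
      using S(1) by blast
  qed
next
  case (Suc n)
  show ?case
  proof (intro allI impI)
    fix S assume S: "S \<in> RG_vertices M N k" "card (S - J) = Suc n"
    have MS: "M S" and NS: "N S" and cS: "card S = k" using S(1) unfolding RG_vertices_def common_indep_def by auto
    have MJ: "M J" and NJ: "N J" using J unfolding common_indep_def by auto
    have fS: "finite S" using matroid_finite[OF mM MS] .
    have fJ: "finite J" using matroid_finite[OF mM MJ] .
    obtain z where z: "z \<in> J - S" "M (insert z S)"
      using matroid_aug[OF mM MS MJ] cS J(2) by auto
    define A where "A = insert z (S \<inter> J)"
    have NA: "N A" using matroid_sub[OF mN NJ] z unfolding A_def by auto
    have SJne: "S - J \<noteq> {}" using S(2) by (metis card.empty nat.distinct(1))
    have "S \<inter> J \<subset> S" using SJne by auto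
    then have "card (S \<inter> J) < card S" using fS psubset_card_mono by blast
    moreover have "card A = Suc (card (S \<inter> J))" unfolding A_def using z fS by simp
    ultimately have cA: "card A \<le> card S" by simp
    obtain B where B: "N B" "A \<subseteq> B" "B \<subseteq> A \<union> S" "card B = card S"
      using aug_to_size[OF mN, rule_format, OF NA NS refl cA] by blast
    have Bsub: "B \<subseteq> insert z S" using B(3) unfolding A_def by auto
    have zB: "z \<in> B" using B(2) unfolding A_def by auto
    have cI: "card (insert z S) = k + 1" using z fS cS by simp
    have "B \<noteq> insert z S" using B(4) cS cI by (metis n_not_Suc_n Suc_eq_plus1)
    then have "B \<subset> insert z S" using Bsub by blast
    then obtain x where x: "x \<in> insert z S" "x \<notin> B" by blast
    have fI: "finite (insert z S)" using fS by simp
    have Beq: "B = insert z S - {x}"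
    proof -
      have "B \<subseteq> insert z S - {x}" using Bsub x by auto
      moreover have "card (insert z S - {x}) = k" using cI x fI by simp
      ultimately show ?thesis using B(4) cS fI
        by (metis card_subset_eq finite_Diff)
    qed
    have xS: "x \<in> S" "x \<noteq> z" using x zB by auto
    have xJ: "x \<notin> J" using x B(2) xS unfolding A_def by auto
    have MB: "M B" using matroid_sub[OF mM z(2) Bsub] .
    have BV: "B \<in> RG_vertices M N k" using MB B(1) B(4) cS
      unfolding RG_vertices_def common_indep_def by auto
    have un: "S \<union> B = insert z S" using Beq xS by auto
    have edge: "(S, B) \<in> RG_edges M N k \<inter> (RG_vertices M N k \<times> RG_vertices M N k)"
      using S(1) BV un z(2) cI unfolding RG_edges_def by auto
    have "B - J = (S - J) - {x}" using Beq xS xJ z by auto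
    then have "card (B - J) = n" using S(2) xS xJ fS by simp
    from Suc.IH[rule_format, OF BV this] obtain T where
      "T \<in> RG_vertices M N k" "T \<subseteq> J" "(B, T) \<in> (RG_edges M N k \<inter> (RG_vertices M N k \<times> RG_vertices M N k))\<^sup>*"
      by blast
    moreover note converse_rtrancl_into_rtrancl[OF edge this(3)]
    ultimately show "\<exists>T \<in> RG_vertices M N k. T \<subseteq> J \<and> (S, T) \<in> (RG_edges M N k \<inter> (RG_vertices M N k \<times> RG_vertices M N k))\<^sup>*"
      by blast
  qed
qed

theorem corollary5p4:
  fixes V :: "'a set" and M N :: "'a set \<Rightarrow> bool" and k :: nat
  assumes "matroid V M" and "matroid V N"
    and "k \<ge> 1" and "int k \<le> int (nu M N) - 1"
  shows "graph_connected (RG_vertices M N k) (RG_edges M N k)"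
proof -
  note mM = assms(1) and mN = assms(2)
  define Vs where "Vs = RG_vertices M N k"
  define E where "E = RG_edges M N k \<inter> (Vs \<times> Vs)"
  have fin: "finite {card X | X. common_indep M N X}"
  proof -
    have "card X \<le> card V" if "M X" for X
    proof -
      have "X \<subseteq> V" "finite V" using mM that unfolding matroid_def by blast+
      then show ?thesis by (simp add: card_mono)
    qed
    then have "{card X | X. common_indep M N X} \<subseteq> {..card V}"
      unfolding common_indep_def by auto
    then show ?thesis using finite_subset by blast
  qed
  have "M {}" "N {}" using mM mN unfolding matroid_def by simp_all
  then have ne: "{card X | X. common_indep M N X} \<noteq> {}"
    unfolding common_indep_def by blast
  obtain X where X: "common_indep M N X" "card X = nu M N"
    using Max_in[OF fin ne] unfolding nu_def by auto
  have "k + 1 \<le> card X" using X assms(4) by simp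
  then obtain J where J: "J \<subseteq> X" "card J = k + 1"
    by (meson obtain_subset_with_card_n)
  have CJ: "common_indep M N J" using X J mM mN matroid_sub unfolding common_indep_def by metis
  have MJ: "M J" and NJ: "N J" using CJ unfolding common_indep_def by auto
  have fJ: "finite J" using matroid_finite[OF mM MJ] .
  have subv: "T \<in> Vs" if "T \<subseteq> J" "card T = k" for T
    using that MJ NJ matroid_sub[OF mM] matroid_sub[OF mN]
    unfolding Vs_def RG_vertices_def common_indep_def by blast
  have reach: "\<exists>T \<in> Vs. T \<subseteq> J \<and> (S, T) \<in> E\<^sup>*" if "S \<in> Vs" for S
    using main_step[OF mM mN CJ J(2), rule_format, OF _ refl, of S] that
    unfolding Vs_def E_def by blast
  have symE: "sym E" unfolding sym_def E_def RG_edges_def by (auto simp: Un_commute)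
  then have symR: "sym (E\<^sup>*)" by (rule sym_rtrancl)
  have clique: "(T1, T2) \<in> E\<^sup>*" if "T1 \<in> Vs" "T2 \<in> Vs" "T1 \<subseteq> J" "T2 \<subseteq> J" for T1 T2
  proof (cases "T1 = T2")
    case True then show ?thesis by simp
  next
    case False
    have c1: "card T1 = k" and c2: "card T2 = k" using that unfolding Vs_def RG_vertices_def by auto
    have f1: "finite T1" "finite T2" using that fJ finite_subset by auto
    have "\<not> T2 \<subseteq> T1" using False c1 c2 f1 card_subset_eq by metis
    then have "T1 \<subset> T1 \<union> T2" by auto
    then have "card T1 < card (T1 \<union> T2)" using f1 by (intro psubset_card_mono) auto
    moreover have "card (T1 \<union> T2) \<le> card J" using that fJ card_mono by (metis Un_subset_iff)
    ultimately have cu: "card (T1 \<union> T2) = k + 1" using c1 J(2) by simp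
    have "M (T1 \<union> T2)" using matroid_sub[OF mM MJ] that by auto
    then have "(T1, T2) \<in> E" using that cu unfolding E_def RG_edges_def Vs_def by auto
    then show ?thesis by blast
  qed
  obtain T0 where T0: "T0 \<subseteq> J" "card T0 = k"
    using obtain_subset_with_card_n[of k J] J(2) by auto
  have "Vs \<noteq> {}" using subv[OF T0] by blast
  moreover have "(x, y) \<in> E\<^sup>*" if xy: "x \<in> Vs" "y \<in> Vs" for x y
  proof -
    obtain Tx where Tx: "Tx \<in> Vs" "Tx \<subseteq> J" "(x, Tx) \<in> E\<^sup>*" using reach xy(1) by blast
    obtain Ty where Ty: "Ty \<in> Vs" "Ty \<subseteq> J" "(y, Ty) \<in> E\<^sup>*" using reach xy(2) by blast
    have "(Ty, y) \<in> E\<^sup>*" using Ty(3) symR unfolding sym_def by blast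
    moreover have "(Tx, Ty) \<in> E\<^sup>*" using clique Tx(1,2) Ty(1,2) by blast
    ultimately show ?thesis using Tx(3) rtrancl_trans by metis
  qed
  ultimately show ?thesis unfolding graph_connected_def Vs_def E_def by blast
qed

end
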